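(* Let $P_1,P_2$ be probability distributions on a finite set $A$ with $P_1(a)>0$ and $P_2(a)>0$ for all $a\in A$. For a sequence of decision regions $C_n\subset A^n$, let $\alpha_n=P_1^n(C_n^c)$ and $\beta_n=P_2^n(C_n)$. Then: (i) for all $n\geq1$, $\beta_n\geq e^{-n\varepsilon(\alpha_n)}$; (ii) if $\alpha_n\to0$, then $\liminf_{n\to\infty}\frac1n\log\beta_n\geq -H(P_1\|P_2)$; (iii) there exists a sequence of decision regions $C_n$ with $\alpha_n\to0$ and $\frac1n\log\beta_n\to -H(P_1\|P_2)$ as $n\to\infty$.
   Context: $\rho$ is the Hamming distortion on $A$: $\rho(x,y)=1$ if $x\ne y$ and $0$ if $x=y$, and $\rho_n(x_1^n,y_1^n)=\frac1n\sum_{i=1}^n\rho(x_i,y_i)$. $H(\mu\|\nu)=\sum_s\mu(s)\log\frac{\mu(s)}{\nu(s)}$ (natural log). For a probability measure $Q$ on $A$ and $D\ge0$, ${\cal M}(P_1,Q,D)$ is the set of probability measures $W$ on $A\times A$ with first marginal $P_1$, second marginal $Q$ and $E_W[\rho(X,Y)]\le D$; $I(P_1,Q,D)=\inf_{W\in{\cal M}(P_1,Q,D)}H(W\|P_1\times Q)$ ($+\infty$ if empty); $R(D;P_1,P_2)=\inf_Q\{I(P_1,Q,D)+E_Q[\log P_2(Y)]\}$ over probability distributions $Q$ on $A$. The error exponent is $\varepsilon(\alpha)=-R(\alpha;P_1,P_2)$ for $\alpha\in[0,1]$ (so that $\varepsilon(0)=H(P_1\|P_2)$). $P_i^n$ denotes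 the product distribution on $A^n$. *)

theory Defs
  imports "HOL-Analysis.Analysis"
begin

definition is_distr :: "('b::finite \<Rightarrow> real) \<Rightarrow> bool" where
  "is_distr Q \<longleftrightarrow> (\<forall>x. 0 \<le> Q x) \<and> (\<Sum>x\<in>UNIV. Q x) = 1"

definition rho :: "'a \<Rightarrow> 'a \<Rightarrow> real" where
  "rho x y = (if x \<noteq> y then 1 else 0)"

definition relent :: "('b::finite \<Rightarrow> real) \<Rightarrow> ('b \<Rightarrow> real) \<Rightarrow> ereal" where
  "relent mu nu =
     (if \<exists>s. mu s > 0 \<and> nu s = 0 then \<infinity>
      else ereal (\<Sum>s\<in>UNIV. if mu s = 0 then 0 else mu s * ln (mu s / nu s)))"

definition couplings :: "('a::finite \<Rightarrow> real) \<Rightarrow> ('a \<Rightarrow> real) \<Rightarrow> real \<Rightarrow> ('a \<times> 'a \<Rightarrow> real) set" where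
  "couplings P1 Q D = {W. is_distr W \<and>
      (\<forall>x. (\<Sum>y\<in>UNIV. W (x, y)) = P1 x) \<and>
      (\<forall>y. (\<Sum>x\<in>UNIV. W (x, y)) = Q y) \<and>
      (\<Sum>s\<in>UNIV. W s * rho (fst s) (snd s)) \<le> D}"

text \<open>I(P1,Q,D); Inf of the empty set of ereals is +infinity.\<close>
definition Ifun :: "('a::finite \<Rightarrow> real) \<Rightarrow> ('a \<Rightarrow> real) \<Rightarrow> real \<Rightarrow> ereal" where
  "Ifun P1 Q D = Inf ((\<lambda>W. relent W (\<lambda>(x, y). P1 x * Q y)) ` couplings P1 Q D)"

definition Rfun :: "real \<Rightarrow> ('a::finite \<Rightarrow> real) \<Rightarrow> ('a \<Rightarrow> real) \<Rightarrow> ereal" where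
  "Rfun D P1 P2 = Inf ((\<lambda>Q. Ifun P1 Q D + ereal (\<Sum>y\<in>UNIV. Q y * ln (P2 y))) ` {Q. is_distr Q})"

definition err_exp :: "('a::finite \<Rightarrow> real) \<Rightarrow> ('a \<Rightarrow> real) \<Rightarrow> real \<Rightarrow> ereal" where
  "err_exp P1 P2 \<alpha> = - Rfun \<alpha> P1 P2"

text \<open>Product measure P^n of a set of words of length n (words = lists).\<close>
definition prod_meas :: "('a \<Rightarrow> real) \<Rightarrow> 'a list set \<Rightarrow> real" where
  "prod_meas P S = (\<Sum>xs\<in>S. prod_list (map P xs))"

definition words :: "nat \<Rightarrow> 'a list set" where
  "words n = {xs. length xs = n}"

end

theory Submission
  imports Defs "HOL-Real_Asymp.Real_Asymp"
begin


lemma finite_words[simp]: "finite (words n :: ('a::finite) list set)"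
proof -
  have "words n = {xs. set xs \<subseteq> (UNIV::'a set) \<and> length xs = n}" by (auto simp: words_def)
  thus ?thesis using finite_lists_length_eq[of "UNIV::'a set" n] by simp
qed

lemma words_0[simp]: "words 0 = {[]}" by (auto simp: words_def)

lemma words_Suc: "words (Suc n) = (\<lambda>(a,x). a#x) ` (UNIV \<times> words n)"
  by (auto simp: words_def image_iff length_Suc_conv)

lemma sum_words_Suc:
  fixes f :: "('a::finite) list \<Rightarrow> 'b::comm_monoid_add"
  shows "(\<Sum>x\<in>words (Suc n). f x) = (\<Sum>a\<in>UNIV. \<Sum>x\<in>words n. f (a#x))"
proof -
  have inj: "inj_on (\<lambda>(a,x). a#x) (UNIV \<times> words n)" by (auto simp: inj_on_def)
  have "(\<Sum>x\<in>words (Suc n). f x) = (\<Sum>p\<in>UNIV \<times> words n. f ((\<lambda>(a,x). a#x) p))"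
    unfolding words_Suc by (rule sum.reindex[OF inj, unfolded comp_def])
  also have "\<dots> = (\<Sum>a\<in>UNIV. \<Sum>x\<in>words n. f (a#x))"
    by (simp add: sum.cartesian_product split_def)
  finally show ?thesis .
qed

lemma sum_prod_zip:
  fixes g :: "('a::finite) \<Rightarrow> 'b \<Rightarrow> real"
  shows "length y = n \<Longrightarrow>
    (\<Sum>x\<in>words n. prod_list (map (\<lambda>(a,b). g a b) (zip x y))) = prod_list (map (\<lambda>b. \<Sum>a\<in>UNIV. g a b) y)"
proof (induction y arbitrary: n)
  case Nil thus ?case by simp
next
  case (Cons b y)
  then obtain m where n: "n = Suc m" and "length y = m" by auto
  thus ?case using Cons by (simp add: sum_words_Suc sum_distrib_right[symmetric] sum_distrib_left[symmetric])
qed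

lemma sum_prod_words:
  fixes P :: "('a::finite) \<Rightarrow> real"
  shows "(\<Sum>x\<in>words n. prod_list (map P x)) = (\<Sum>a\<in>UNIV. P a) ^ n"
  by (induction n) (simp_all add: sum_words_Suc sum_distrib_right[symmetric] sum_distrib_left[symmetric])

lemma sum_prod_sumlist:
  fixes P :: "('a::finite) \<Rightarrow> real"
  assumes "(\<Sum>a\<in>UNIV. P a) = 1"
  shows "(\<Sum>x\<in>words n. prod_list (map P x) * sum_list (map h x)) = real n * (\<Sum>a\<in>UNIV. P a * h a)"
proof (induction n)
  case 0 thus ?case by simp
next
  case (Suc n)
  have "(\<Sum>x\<in>words (Suc n). prod_list (map P x) * sum_list (map h x))
     = (\<Sum>a\<in>UNIV. \<Sum>x\<in>words n. P a * h a * prod_list (map P x) + P a * (prod_list (map P x) * sum_list (map h x)))"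
    by (simp add: sum_words_Suc algebra_simps)
  also have "\<dots> = (\<Sum>a\<in>UNIV. P a * h a * (\<Sum>x\<in>words n. prod_list (map P x)) + P a * (\<Sum>x\<in>words n. prod_list (map P x) * sum_list (map h x)))"
    by (simp add: sum.distrib sum_distrib_left)
  also have "\<dots> = (\<Sum>a\<in>UNIV. P a * h a + P a * (real n * (\<Sum>a\<in>UNIV. P a * h a)))"
    using Suc by (simp add: sum_prod_words assms)
  also have "\<dots> = real (Suc n) * (\<Sum>a\<in>UNIV. P a * h a)"
  proof -
    have "(\<Sum>a\<in>UNIV. P a * (real n * (\<Sum>a\<in>UNIV. P a * h a))) = real n * (\<Sum>a\<in>UNIV. P a * h a)"
      by (simp add: sum_distrib_right[symmetric] assms)
    thus ?thesis by (simp add: sum.distrib algebra_simps)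
  qed
  finally show ?case .
qed

lemma prod_meas_words:
  assumes "is_distr P" shows "prod_meas P (words n) = 1"
  using assms by (simp add: prod_meas_def sum_prod_words is_distr_def)

lemma sum_list_zip_fst: "length x = length y \<Longrightarrow> sum_list (map (\<lambda>(a,b). h a) (zip x y)) = sum_list (map h x)"
  by (induction x y rule: list_induct2) auto
lemma sum_list_zip_snd: "length x = length y \<Longrightarrow> sum_list (map (\<lambda>(a,b). h b) (zip x y)) = sum_list (map h y)"
  by (induction x y rule: list_induct2) auto

lemma prod_list_pos': "(\<And>v. v \<in> set xs \<Longrightarrow> (f v::real) > 0) \<Longrightarrow> prod_list (map f xs) > 0"
  by (induction xs) auto

lemma ln_prod_list: "(\<And>v. v \<in> set xs \<Longrightarrow> (f v::real) > 0) \<Longrightarrow> ln (prod_list (map f xs)) = sum_list (map (\<lambda>v. ln (f v)) xs)"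
proof (induction xs)
  case (Cons a xs)
  have "f a > 0" "prod_list (map f xs) > 0" using Cons.prems prod_list_pos'[of xs f] by auto
  hence "ln (f a * prod_list (map f xs)) = ln (f a) + ln (prod_list (map f xs))" by (rule ln_mult_pos)
  thus ?case using Cons by simp
qed simp

lemma sum_list_count_UNIV:
  fixes g :: "'a::finite \<Rightarrow> real"
  shows "sum_list (map g zs) = (\<Sum>v\<in>UNIV. real (count_list zs v) * g v)"
proof (induction zs)
  case Nil thus ?case by simp
next
  case (Cons z zs)
  have "(\<Sum>v\<in>UNIV. real (count_list (z#zs) v) * g v) = (\<Sum>v\<in>UNIV. (if v = z then g v else 0) + real (count_list zs v) * g v)"
    by (rule sum.cong) (auto simp: algebra_simps)
  also have "\<dots> = g z + (\<Sum>v\<in>UNIV. real (count_list zs v) * g v)" by (simp add: sum.distrib)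
  finally show ?case using Cons by simp
qed



lemma sum_UNIV_pair:
  fixes f :: "('a::finite) \<times> ('b::finite) \<Rightarrow> real"
  shows "(\<Sum>v\<in>UNIV. f v) = (\<Sum>a\<in>UNIV. \<Sum>b\<in>UNIV. f (a,b))"
  by (simp add: sum.cartesian_product flip: UNIV_Times_UNIV)

lemma gibbs:
  fixes p r :: "'b \<Rightarrow> real"
  assumes "finite S" "\<And>x. x \<in> S \<Longrightarrow> p x > 0" "\<And>x. x \<in> S \<Longrightarrow> r x > 0"
    "sum p S = 1" "sum r S \<le> 1"
  shows "(\<Sum>x\<in>S. p x * ln (r x)) \<le> (\<Sum>x\<in>S. p x * ln (p x))"
proof -
  have "(\<Sum>x\<in>S. p x * ln (r x) - p x * ln (p x)) \<le> (\<Sum>x\<in>S. r x - p x)"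
  proof (rule sum_mono)
    fix x assume x: "x \<in> S"
    have "ln (r x / p x) \<le> r x / p x - 1" using x assms by (intro ln_le_minus_one) auto
    hence "p x * ln (r x / p x) \<le> p x * (r x / p x - 1)" using assms(2)[OF x] by (intro mult_left_mono) auto
    thus "p x * ln (r x) - p x * ln (p x) \<le> r x - p x"
      using assms(2,3)[OF x] by (simp add: ln_div algebra_simps)
  qed
  also have "\<dots> \<le> 0" using assms by (simp add: sum_subtractf)
  finally show ?thesis by (simp add: sum_subtractf)
qed

lemma sum_list_split3: "(\<And>v. v \<in> set zs \<Longrightarrow> (G v::real) = hA v + hB v) \<Longrightarrow>
   sum_list (map G zs) = sum_list (map hA zs) + sum_list (map hB zs)"
  by (induction zs) auto

lemma prod_list_le1: "(\<And>v. v \<in> set zs \<Longrightarrow> 0 \<le> (f v::real) \<and> f v \<le> 1) \<Longrightarrow> prod_list (map f zs) \<le> 1"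
proof (induction zs)
  case (Cons a zs)
  have "0 \<le> prod_list (map f zs)" using Cons.prems by (intro prod_list_nonneg) auto
  thus ?case using Cons by (auto intro!: mult_le_one)
qed simp

lemma sum_list_le_len: "(\<And>v. (g v::real) \<le> 1) \<Longrightarrow> sum_list (map g zs) \<le> real (length zs)"
  by (induction zs) (auto simp: add_mono)

lemma rho_diag: "sum_list (map (\<lambda>v. rho (fst v) (snd v)) (zip x x)) = 0"
  by (induction x) (auto simp: rho_def)

lemma rho_le1: "rho a b \<le> 1" by (simp add: rho_def)



lemma ln_div_mult3: "(a::real) > 0 \<Longrightarrow> b > 0 \<Longrightarrow> c > 0 \<Longrightarrow> ln (a / b * c) = ln a - ln b + ln c"
  by (simp add: ln_mult_pos ln_div)

lemma part1:
  fixes P1 P2 :: "'a::finite \<Rightarrow> real" and C :: "'a list set"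
  assumes d1: "is_distr P1" and d2: "is_distr P2"
    and pos1: "\<And>a. P1 a > 0" and pos2: "\<And>a. P2 a > 0"
    and n1: "n \<ge> 1" and Csub: "C \<subseteq> words n" and Cne: "C \<noteq> {}"
  shows "- ereal (real n) * err_exp P1 P2 (prod_meas P1 (words n - C))
             \<le> ereal (ln (prod_meas P2 C))"
proof -
  obtain c0 where c0: "c0 \<in> C" using Cne by auto
  define \<phi> where "\<phi> x = (if x \<in> C then x else c0)" for x
  define p where "p x = prod_list (map P1 x)" for x
  define cnt where "cnt x v = count_list (zip x (\<phi> x)) v" for x v
  define W where "W v = (\<Sum>x\<in>words n. p x * real (cnt x v)) / real n" for v
  define Q where "Q b = (\<Sum>a\<in>UNIV. W (a,b))" for b
  define \<alpha> where "\<alpha> = prod_meas P1 (words n - C)"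
  define \<beta> where "\<beta> = prod_meas P2 C"
  have npos: "real n > 0" using n1 by simp
  have finC: "finite C" by (rule finite_subset[OF Csub]) simp
  have S1: "(\<Sum>a\<in>UNIV. P1 a) = 1" and S2: "(\<Sum>a\<in>UNIV. P2 a) = 1" using d1 d2 by (auto simp: is_distr_def)
  have ppos: "p x > 0" for x unfolding p_def by (rule prod_list_pos') (use pos1 in auto)
  have psum: "(\<Sum>x\<in>words n. p x) = 1" unfolding p_def using S1 by (simp add: sum_prod_words)
  have \<phi>w: "\<phi> x \<in> C" if "x \<in> words n" for x using c0 that by (auto simp: \<phi>_def)
  have \<phi>len: "length (\<phi> x) = length x" if "x \<in> words n" for x
    using \<phi>w[OF that] Csub that by (auto simp: words_def)
  have Wnn: "W v \<ge> 0" for v unfolding W_def by (intro divide_nonneg_pos sum_nonneg mult_nonneg_nonneg npos less_imp_le[OF ppos]) simp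
  have E: "(\<Sum>x\<in>words n. p x * sum_list (map g (zip x (\<phi> x)))) = real n * (\<Sum>v\<in>UNIV. W v * g v)" for g
  proof -
    have "(\<Sum>x\<in>words n. p x * sum_list (map g (zip x (\<phi> x))))
        = (\<Sum>x\<in>words n. \<Sum>v\<in>UNIV. p x * real (cnt x v) * g v)"
      by (simp add: sum_list_count_UNIV sum_distrib_left cnt_def mult.assoc)
    also have "\<dots> = (\<Sum>v\<in>UNIV. (\<Sum>x\<in>words n. p x * real (cnt x v)) * g v)"
      by (subst sum.swap) (simp add: sum_distrib_right)
    also have "\<dots> = real n * (\<Sum>v\<in>UNIV. W v * g v)"
      using npos by (simp add: W_def sum_distrib_left)
    finally show ?thesis .
  qed
  have marg1: "(\<Sum>b\<in>UNIV. W (a,b)) = P1 a" for a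
  proof -
    have "real n * (\<Sum>v\<in>UNIV. W v * (\<lambda>(a',b). if a' = a then 1 else 0) v)
       = (\<Sum>x\<in>words n. p x * sum_list (map (\<lambda>a'. if a' = a then 1 else 0) x))"
      unfolding E[symmetric] by (intro sum.cong refl arg_cong[where f="\<lambda>t. p _ * t"] sum_list_zip_fst)
        (simp add: \<phi>len)
    also have "\<dots> = real n * P1 a" unfolding p_def by (subst sum_prod_sumlist[OF S1]) (simp add: if_distrib cong: if_cong)
    finally have "(\<Sum>v\<in>UNIV. W v * (\<lambda>(a',b). if a' = a then 1 else 0) v) = P1 a" using npos by simp
    moreover have "(\<Sum>v\<in>UNIV. W v * (\<lambda>(a',b). if a' = a then 1 else 0) v)
       = (\<Sum>aa\<in>UNIV. if aa = a then (\<Sum>b\<in>UNIV. W (aa,b)) else 0)"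
      unfolding sum_UNIV_pair by (intro sum.cong refl) auto
    ultimately show ?thesis by simp
  qed
  have Wd: "is_distr W" unfolding is_distr_def using Wnn by (simp add: sum_UNIV_pair marg1 S1)
  have Qd: "is_distr Q"
  proof -
    have "(\<Sum>b\<in>UNIV. \<Sum>a\<in>UNIV. W (a,b)) = (\<Sum>a\<in>UNIV. \<Sum>b\<in>UNIV. W (a,b))" by (rule sum.swap)
    thus ?thesis unfolding is_distr_def Q_def using Wnn by (simp add: marg1 S1 sum_nonneg)
  qed
  have dist: "(\<Sum>s\<in>UNIV. W s * rho (fst s) (snd s)) \<le> \<alpha>"
  proof -
    have "real n * (\<Sum>s\<in>UNIV. W s * rho (fst s) (snd s))
        = (\<Sum>x\<in>words n. p x * sum_list (map (\<lambda>s. rho (fst s) (snd s)) (zip x (\<phi> x))))"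
      by (rule E[symmetric])
    also have "\<dots> = (\<Sum>x\<in>C. p x * sum_list (map (\<lambda>s. rho (fst s) (snd s)) (zip x (\<phi> x))))
        + (\<Sum>x\<in>words n - C. p x * sum_list (map (\<lambda>s. rho (fst s) (snd s)) (zip x (\<phi> x))))"
      using sum.subset_diff[OF Csub finite_words] by (simp add: add.commute)
    also have "\<dots> \<le> 0 + (\<Sum>x\<in>words n - C. p x * real n)"
    proof -
      have z: "(\<Sum>x\<in>C. p x * sum_list (map (\<lambda>s. rho (fst s) (snd s)) (zip x (\<phi> x)))) = 0"
        by (intro sum.neutral) (simp add: \<phi>_def rho_diag)
      have "(\<Sum>x\<in>words n - C. p x * sum_list (map (\<lambda>s. rho (fst s) (snd s)) (zip x (\<phi> x))))
          \<le> (\<Sum>x\<in>words n - C. p x * real n)"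
      proof (rule sum_mono)
        fix x assume x: "x \<in> words n - C"
        have "sum_list (map (\<lambda>s. rho (fst s) (snd s)) (zip x (\<phi> x))) \<le> real (length (zip x (\<phi> x)))"
          by (rule sum_list_le_len) (simp add: rho_le1)
        also have "\<dots> = real n" using x \<phi>len[of x] by (simp add: words_def)
        finally show "p x * sum_list (map (\<lambda>s. rho (fst s) (snd s)) (zip x (\<phi> x))) \<le> p x * real n"
          using ppos[of x] by (intro mult_left_mono) auto
      qed
      thus ?thesis using z by simp
    qed
    also have "\<dots> = real n * \<alpha>" by (simp add: \<alpha>_def prod_meas_def p_def sum_distrib_left mult.commute)
    finally show ?thesis using npos by simp
  qed
  have coup: "W \<in> couplings P1 Q \<alpha>"
    unfolding couplings_def using Wd marg1 dist by (simp add: Q_def)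
  have Wpos: "W v > 0" if x: "x \<in> words n" and v: "v \<in> set (zip x (\<phi> x))" for x v
  proof -
    have "cnt x v \<noteq> 0" using v by (simp add: cnt_def count_list_0_iff)
    hence "p x * real (cnt x v) > 0" using ppos[of x] by simp
    moreover have "p x * real (cnt x v) \<le> (\<Sum>x'\<in>words n. p x' * real (cnt x' v))"
      by (rule member_le_sum[OF x]) (simp_all add: less_imp_le[OF ppos])
    ultimately show ?thesis unfolding W_def using npos by simp
  qed
  have Qge: "W (a,b) \<le> Q b" for a b unfolding Q_def
    by (rule member_le_sum) (simp_all add: Wnn)
  define f2 where "f2 = (\<lambda>(a,b). W (a,b) / Q b)"
  define P2n where "P2n y = prod_list (map P2 y)" for y
  have P2npos: "P2n y > 0" for y unfolding P2n_def by (rule prod_list_pos') (use pos2 in auto)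
  have beta': "\<beta> = (\<Sum>y\<in>C. P2n y)" by (simp add: \<beta>_def prod_meas_def P2n_def)
  have \<beta>pos: "\<beta> > 0" unfolding beta' using finC Cne P2npos by (intro sum_pos) auto
  have f2nn: "f2 v \<ge> 0" for v
  proof -
    obtain a b where ab: "v = (a,b)" by (cases v)
    have "0 \<le> Q b" using Wnn[of "(a,b)"] Qge[of a b] by linarith
    thus ?thesis using Wnn[of v] by (simp add: f2_def ab)
  qed
  have f2pos: "f2 v > 0" if x: "x \<in> words n" and v: "v \<in> set (zip x (\<phi> x))" for x v
  proof -
    obtain a b where ab: "v = (a,b)" by (cases v)
    have "W (a,b) > 0" using Wpos[OF x v] ab by simp
    moreover have "Q b > 0" using Qge[of a b] calculation by simp
    ultimately show ?thesis by (simp add: f2_def ab)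
  qed
  define r where "r x = P2n (\<phi> x) / \<beta> * prod_list (map f2 (zip x (\<phi> x)))" for x
  have prpos: "prod_list (map f2 (zip x (\<phi> x))) > 0" if x: "x \<in> words n" for x
    by (rule prod_list_pos') (use f2pos[OF x] in auto)
  have rpos: "r x > 0" if x: "x \<in> words n" for x
    unfolding r_def using P2npos \<beta>pos prpos[OF x] by simp
  have rsum: "(\<Sum>x\<in>words n. r x) \<le> 1"
  proof -
    have nn: "0 \<le> P2n y / \<beta> * prod_list (map f2 (zip x y))" for x y
      using P2npos[of y] \<beta>pos f2nn by (intro mult_nonneg_nonneg divide_nonneg_pos prod_list_nonneg) (auto intro: less_imp_le)
    have "(\<Sum>x\<in>words n. r x) \<le> (\<Sum>x\<in>words n. \<Sum>y\<in>C. P2n y / \<beta> * prod_list (map f2 (zip x y)))"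
    proof (rule sum_mono)
      fix x :: "'a list" assume x: "x \<in> words n"
      show "r x \<le> (\<Sum>y\<in>C. P2n y / \<beta> * prod_list (map f2 (zip x y)))"
        unfolding r_def by (rule member_le_sum[where f = "\<lambda>y. P2n y / \<beta> * prod_list (map f2 (zip x y))", OF \<phi>w[OF x]])
          (use nn finC in auto)
    qed
    also have "\<dots> = (\<Sum>y\<in>C. P2n y / \<beta> * (\<Sum>x\<in>words n. prod_list (map f2 (zip x y))))"
      by (subst sum.swap) (simp add: sum_distrib_left)
    also have "\<dots> = (\<Sum>y\<in>C. P2n y / \<beta> * prod_list (map (\<lambda>b. \<Sum>a\<in>UNIV. W (a,b) / Q b) y))"
    proof (intro sum.cong refl arg_cong[where f="\<lambda>t. _ * t"])
      fix y :: "'a list" assume y: "y \<in> C"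
      hence "length y = n" using Csub by (auto simp: words_def)
      thus "(\<Sum>x\<in>words n. prod_list (map f2 (zip x y))) = prod_list (map (\<lambda>b. \<Sum>a\<in>UNIV. W (a,b) / Q b) y)"
        unfolding f2_def by (rule sum_prod_zip)
    qed
    also have "\<dots> \<le> (\<Sum>y\<in>C. P2n y / \<beta> * 1)"
    proof (intro sum_mono mult_left_mono prod_list_le1)
      fix y :: "'a list" and b :: 'a
      have "(\<Sum>a\<in>UNIV. W (a,b) / Q b) = Q b / Q b" unfolding sum_divide_distrib[symmetric] Q_def ..
      thus "0 \<le> (\<Sum>a\<in>UNIV. W (a,b) / Q b) \<and> (\<Sum>a\<in>UNIV. W (a,b) / Q b) \<le> 1"
        using Qd by (auto simp: is_distr_def)
      show "0 \<le> P2n y / \<beta>" using P2npos[of y] \<beta>pos by simp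
    qed
    also have "\<dots> = 1" using \<beta>pos by (simp add: beta' sum_divide_distrib[symmetric])
    finally show ?thesis .
  qed
  have gib: "(\<Sum>x\<in>words n. p x * ln (r x)) \<le> (\<Sum>x\<in>words n. p x * ln (p x))"
    by (rule gibbs) (use ppos rpos psum rsum in auto)
  define G where "G = (\<lambda>(a::'a,b). ln (P2 b) + ln (f2 (a,b)))"
  define L1 where "L1 = (\<lambda>(a::'a,b::'a). ln (P1 a))"
  have lnr: "ln (r x) = sum_list (map G (zip x (\<phi> x))) - ln \<beta>" if x: "x \<in> words n" for x
  proof -
    have "ln (r x) = ln (P2n (\<phi> x)) - ln \<beta> + ln (prod_list (map f2 (zip x (\<phi> x))))"
      unfolding r_def by (rule ln_div_mult3[OF P2npos \<beta>pos prpos[OF x]])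
    also have "ln (P2n (\<phi> x)) = sum_list (map (\<lambda>(a,b). ln (P2 b)) (zip x (\<phi> x)))"
      unfolding P2n_def using pos2 \<phi>len[OF x] by (simp add: ln_prod_list sum_list_zip_snd)
    also have "ln (prod_list (map f2 (zip x (\<phi> x)))) = sum_list (map (\<lambda>v. ln (f2 v)) (zip x (\<phi> x)))"
      by (rule ln_prod_list) (rule f2pos[OF x])
    also have "sum_list (map (\<lambda>(a,b). ln (P2 b)) (zip x (\<phi> x))) - ln \<beta> + sum_list (map (\<lambda>v. ln (f2 v)) (zip x (\<phi> x)))
       = sum_list (map G (zip x (\<phi> x))) - ln \<beta>"
      by (subst sum_list_split3[where hA="\<lambda>(a,b). ln (P2 b)" and hB="\<lambda>v. ln (f2 v)"]) (auto simp: G_def)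
    finally show ?thesis .
  qed
  have lnp: "ln (p x) = sum_list (map L1 (zip x (\<phi> x)))" if x: "x \<in> words n" for x
    unfolding p_def L1_def using pos1 \<phi>len[OF x] by (simp add: ln_prod_list sum_list_zip_fst)
  have "(\<Sum>x\<in>words n. p x * ln (r x)) = real n * (\<Sum>v\<in>UNIV. W v * G v) - ln \<beta>"
  proof -
    have "(\<Sum>x\<in>words n. p x * ln (r x)) = (\<Sum>x\<in>words n. p x * sum_list (map G (zip x (\<phi> x))) - p x * ln \<beta>)"
      by (intro sum.cong refl) (simp add: lnr algebra_simps)
    also have "\<dots> = real n * (\<Sum>v\<in>UNIV. W v * G v) - ln \<beta>"
      by (simp add: sum_subtractf E sum_distrib_right[symmetric] psum)
    finally show ?thesis .
  qed
  moreover have "(\<Sum>x\<in>words n. p x * ln (p x)) = real n * (\<Sum>v\<in>UNIV. W v * L1 v)"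
    by (subst E[symmetric]) (intro sum.cong refl, simp add: lnp)
  ultimately have key0: "real n * ((\<Sum>v\<in>UNIV. W v * G v) - (\<Sum>v\<in>UNIV. W v * L1 v)) \<le> ln \<beta>"
    using gib by (simp add: algebra_simps)
  define K where "K = (\<Sum>s\<in>UNIV. if W s = 0 then 0 else W s * ln (W s / (\<lambda>(x, y). P1 x * Q y) s))"
  define Eq where "Eq = (\<Sum>y\<in>UNIV. Q y * ln (P2 y))"
  have KE: "(\<Sum>v\<in>UNIV. W v * G v) - (\<Sum>v\<in>UNIV. W v * L1 v) = K + Eq"
  proof -
    have "(\<Sum>v\<in>UNIV. W v * G v) - (\<Sum>v\<in>UNIV. W v * L1 v)
        = (\<Sum>v\<in>UNIV. (if W v = 0 then 0 else W v * ln (W v / (\<lambda>(x, y). P1 x * Q y) v)) + W v * ln (P2 (snd v)))"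
    proof (subst sum_subtractf[symmetric], intro sum.cong refl)
      fix v :: "'a \<times> 'a"
      obtain a b where ab: "v = (a,b)" by (cases v)
      show "W v * G v - W v * L1 v = (if W v = 0 then 0 else W v * ln (W v / (\<lambda>(x, y). P1 x * Q y) v)) + W v * ln (P2 (snd v))"
      proof (cases "W v = 0")
        case True thus ?thesis by simp
      next
        case False
        hence Wp: "W (a,b) > 0" using Wnn[of v] ab by simp
        hence Qp: "Q b > 0" using Qge[of a b] by simp
        show ?thesis using Wp Qp pos1[of a] False
          by (simp add: ab G_def L1_def f2_def ln_div ln_mult_pos algebra_simps)
      qed
    qed
    also have "\<dots> = K + (\<Sum>v\<in>UNIV. W v * ln (P2 (snd v)))" by (simp add: sum.distrib K_def)
    also have "(\<Sum>v\<in>UNIV. W v * ln (P2 (snd v))) = Eq"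
    proof -
      have "(\<Sum>v\<in>UNIV. W v * ln (P2 (snd v))) = (\<Sum>a\<in>UNIV. \<Sum>b\<in>UNIV. W (a,b) * ln (P2 b))"
        by (simp add: sum_UNIV_pair)
      also have "\<dots> = (\<Sum>b\<in>UNIV. \<Sum>a\<in>UNIV. W (a,b) * ln (P2 b))" by (rule sum.swap)
      also have "\<dots> = Eq" by (simp add: Eq_def Q_def sum_distrib_right)
      finally show ?thesis .
    qed
    finally show ?thesis .
  qed
  have key: "real n * (K + Eq) \<le> ln \<beta>" using key0 KE by simp
  have relK: "relent W (\<lambda>(x, y). P1 x * Q y) = ereal K"
  proof -
    have "\<not> (\<exists>s. W s > 0 \<and> (\<lambda>(x, y). P1 x * Q y) s = 0)"
    proof
      assume "\<exists>s. W s > 0 \<and> (\<lambda>(x, y). P1 x * Q y) s = 0"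
      then obtain a b where "W (a,b) > 0" "P1 a * Q b = 0" by auto
      moreover have "Q b > 0" using Qge[of a b] calculation(1) by simp
      ultimately show False using pos1[of a] by simp
    qed
    thus ?thesis unfolding relent_def K_def by simp
  qed
  have "Rfun \<alpha> P1 P2 \<le> Ifun P1 Q \<alpha> + ereal Eq"
    unfolding Rfun_def Eq_def using Qd by (intro INF_lower) simp
  also have "Ifun P1 Q \<alpha> \<le> ereal K"
    unfolding Ifun_def relK[symmetric] by (rule INF_lower[OF coup])
  hence "Ifun P1 Q \<alpha> + ereal Eq \<le> ereal K + ereal Eq" by (rule add_right_mono)
  finally have R: "Rfun \<alpha> P1 P2 \<le> ereal (K + Eq)" by simp
  have "- ereal (real n) * err_exp P1 P2 \<alpha> = ereal (real n) * Rfun \<alpha> P1 P2"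
    by (simp only: err_exp_def ereal_mult_minus_left ereal_mult_minus_right ereal_uminus_uminus)
  also have "\<dots> \<le> ereal (real n) * ereal (K + Eq)" by (rule ereal_mult_left_mono[OF R]) simp
  also have "\<dots> \<le> ereal (ln \<beta>)" using key by simp
  finally show ?thesis by (simp add: \<alpha>_def \<beta>_def)
qed



lemma mean_words:
  fixes P :: "'a::finite \<Rightarrow> real"
  assumes S: "(\<Sum>a\<in>UNIV. P a) = 1"
  shows "(\<Sum>x\<in>words n. prod_list (map P x) * (sum_list (map f x) - real n * (\<Sum>a\<in>UNIV. P a * f a))) = 0"
  using sum_prod_sumlist[OF S, where n=n and h=f] sum_prod_words[where n=n and P=P] S
  by (simp add: right_diff_distrib sum_subtractf sum_distrib_right[symmetric])

lemma var_words:
  fixes P :: "'a::finite \<Rightarrow> real"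
  assumes S: "(\<Sum>a\<in>UNIV. P a) = 1"
  shows "(\<Sum>x\<in>words n. prod_list (map P x) * (sum_list (map f x) - real n * (\<Sum>a\<in>UNIV. P a * f a))^2)
       = real n * (\<Sum>a\<in>UNIV. P a * (f a - (\<Sum>a\<in>UNIV. P a * f a))^2)"
proof (induction n)
  case 0 thus ?case by simp
next
  case (Suc n)
  define m where "m = (\<Sum>a\<in>UNIV. P a * f a)"
  define V where "V = (\<Sum>a\<in>UNIV. P a * (f a - m)^2)"
  define p where "p x = prod_list (map P x)" for x
  define T where "T x = sum_list (map f x) - real n * m" for x
  have IH: "(\<Sum>x\<in>words n. p x * (T x)^2) = real n * V" using Suc by (simp add: m_def V_def p_def T_def)
  have Z: "(\<Sum>x\<in>words n. p x * T x) = 0" using mean_words[OF S, where n=n and f=f] by (simp add: m_def p_def T_def)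
  have P1: "(\<Sum>x\<in>words n. p x) = 1" using sum_prod_words[where n=n and P=P] S by (simp add: p_def)
  have "(\<Sum>x\<in>words (Suc n). prod_list (map P x) * (sum_list (map f x) - real (Suc n) * m)^2)
      = (\<Sum>a\<in>UNIV. \<Sum>x\<in>words n. P a * p x * ((f a - m) + T x)^2)"
    by (simp add: sum_words_Suc p_def T_def algebra_simps)
  also have "\<dots> = (\<Sum>a\<in>UNIV. \<Sum>x\<in>words n. P a * (f a - m)^2 * p x + 2 * P a * (f a - m) * (p x * T x) + P a * (p x * (T x)^2))"
    by (intro sum.cong refl) (simp add: power2_eq_square algebra_simps)
  also have "\<dots> = (\<Sum>a\<in>UNIV. P a * (f a - m)^2 * (\<Sum>x\<in>words n. p x) + 2 * P a * (f a - m) * (\<Sum>x\<in>words n. p x * T x) + P a * (\<Sum>x\<in>words n. p x * (T x)^2))"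
    by (simp add: sum.distrib sum_distrib_left)
  also have "\<dots> = (\<Sum>a\<in>UNIV. P a * (f a - m)^2 + P a * (real n * V))"
    by (simp add: P1 Z IH)
  also have "\<dots> = V + real n * V" by (simp add: sum.distrib V_def sum_distrib_right[symmetric] S)
  finally show ?case by (simp add: m_def V_def algebra_simps)
qed



definition llr :: "('a \<Rightarrow> real) \<Rightarrow> ('a \<Rightarrow> real) \<Rightarrow> 'a \<Rightarrow> real" where
  "llr P1 P2 a = ln (P1 a) - ln (P2 a)"
definition DD :: "('a::finite \<Rightarrow> real) \<Rightarrow> ('a \<Rightarrow> real) \<Rightarrow> real" where
  "DD P1 P2 = (\<Sum>a\<in>UNIV. P1 a * llr P1 P2 a)"
definition VV :: "('a::finite \<Rightarrow> real) \<Rightarrow> ('a \<Rightarrow> real) \<Rightarrow> real" where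
  "VV P1 P2 = (\<Sum>a\<in>UNIV. P1 a * (llr P1 P2 a - DD P1 P2)^2)"
definition typset :: "('a::finite \<Rightarrow> real) \<Rightarrow> ('a \<Rightarrow> real) \<Rightarrow> real \<Rightarrow> nat \<Rightarrow> 'a list set" where
  "typset P1 P2 e n = {x \<in> words n. \<bar>sum_list (map (llr P1 P2) x) - real n * DD P1 P2\<bar> \<le> real n * e}"

lemma cheb:
  fixes P1 P2 :: "'a::finite \<Rightarrow> real"
  assumes d1: "is_distr P1" and e: "e > 0" and n: "n > 0"
  shows "prod_meas P1 (words n - typset P1 P2 e n) \<le> VV P1 P2 / (real n * e^2)"
proof -
  define T where "T x = sum_list (map (llr P1 P2) x) - real n * DD P1 P2" for x
  have S1: "(\<Sum>a\<in>UNIV. P1 a) = 1" using d1 by (simp add: is_distr_def)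
  have nn: "0 \<le> prod_list (map P1 x)" for x using d1 by (intro prod_list_nonneg) (auto simp: is_distr_def)
  have ne: "real n * e > 0" using e n by simp
  have "prod_meas P1 (words n - typset P1 P2 e n) \<le> (\<Sum>x\<in>words n - typset P1 P2 e n. prod_list (map P1 x) * (T x)^2 / (real n * e)^2)"
    unfolding prod_meas_def
  proof (rule sum_mono)
    fix x assume x: "x \<in> words n - typset P1 P2 e n"
    hence "\<bar>T x\<bar> > real n * e" by (auto simp: typset_def T_def)
    hence "(real n * e)^2 \<le> (T x)^2" using ne by (metis abs_le_square_iff abs_of_pos less_imp_le)
    moreover have "(real n * e)^2 > 0" using e n by simp
    ultimately have "1 \<le> (T x)^2 / (real n * e)^2" by (simp add: le_divide_eq)
    from mult_left_mono[OF this nn[of x]] show "prod_list (map P1 x) \<le> prod_list (map P1 x) * (T x)^2 / (real n * e)^2"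
      by simp
  qed
  also have "\<dots> \<le> (\<Sum>x\<in>words n. prod_list (map P1 x) * (T x)^2 / (real n * e)^2)"
    by (rule sum_mono2) (auto intro!: divide_nonneg_nonneg mult_nonneg_nonneg nn)
  also have "\<dots> = real n * VV P1 P2 / (real n * e)^2"
    unfolding sum_divide_distrib[symmetric] T_def DD_def VV_def using var_words[OF S1, where n=n and f="llr P1 P2"] by simp
  also have "\<dots> = VV P1 P2 / (real n * e^2)" using n by (simp add: power2_eq_square)
  finally show ?thesis .
qed

lemma ratio:
  assumes "\<And>a. P1 a > 0" "\<And>a. P2 a > 0"
  shows "prod_list (map P2 x) = prod_list (map P1 x) * exp (- sum_list (map (llr P1 P2) x))"
proof (induction x)
  case (Cons a x)
  have "P2 a = P1 a * exp (- llr P1 P2 a)" using assms[of a] by (simp add: llr_def exp_diff)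
  thus ?case using Cons by (simp add: exp_add[symmetric] algebra_simps exp_minus_inverse)
qed simp

lemma typ_bounds:
  fixes P1 P2 :: "'a::finite \<Rightarrow> real"
  assumes pos1: "\<And>a. P1 a > 0" and pos2: "\<And>a. P2 a > 0" and x: "x \<in> typset P1 P2 e n"
  shows "exp (- (real n * (DD P1 P2 + e))) * prod_list (map P1 x) \<le> prod_list (map P2 x)"
    and "prod_list (map P2 x) \<le> exp (- (real n * (DD P1 P2 - e))) * prod_list (map P1 x)"
proof -
  have rat: "prod_list (map P2 x) = prod_list (map P1 x) * exp (- sum_list (map (llr P1 P2) x))"
    by (rule ratio[of P1 P2 x, OF pos1 pos2])
  have nn: "0 \<le> prod_list (map P1 x)" using pos1 by (intro prod_list_nonneg) (auto intro: less_imp_le)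
  have b: "\<bar>sum_list (map (llr P1 P2) x) - real n * DD P1 P2\<bar> \<le> real n * e" using x by (simp add: typset_def)
  have "exp (- (real n * (DD P1 P2 + e))) \<le> exp (- sum_list (map (llr P1 P2) x))"
    using b by (simp add: algebra_simps abs_le_iff)
  from mult_right_mono[OF this nn]
  show "exp (- (real n * (DD P1 P2 + e))) * prod_list (map P1 x) \<le> prod_list (map P2 x)"
    by (metis rat mult.commute)
  have "exp (- sum_list (map (llr P1 P2) x)) \<le> exp (- (real n * (DD P1 P2 - e)))"
    using b by (simp add: algebra_simps abs_le_iff)
  from mult_right_mono[OF this nn]
  show "prod_list (map P2 x) \<le> exp (- (real n * (DD P1 P2 - e))) * prod_list (map P1 x)"
    by (metis rat mult.commute)
qed

lemma set_bounds:
  fixes P1 P2 :: "'a::finite \<Rightarrow> real"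
  assumes pos1: "\<And>a. P1 a > 0" and pos2: "\<And>a. P2 a > 0" and S: "S \<subseteq> typset P1 P2 e n"
  shows "exp (- (real n * (DD P1 P2 + e))) * prod_meas P1 S \<le> prod_meas P2 S"
    and "prod_meas P2 S \<le> exp (- (real n * (DD P1 P2 - e))) * prod_meas P1 S"
  unfolding prod_meas_def sum_distrib_left
  using typ_bounds[of P1 P2, OF pos1 pos2] S by (auto intro!: sum_mono)

lemma pm_nonneg: "(\<And>a. P a \<ge> 0) \<Longrightarrow> prod_meas P S \<ge> 0"
  unfolding prod_meas_def by (intro sum_nonneg prod_list_nonneg) auto

lemma pm_mono: "(\<And>a. P a \<ge> 0) \<Longrightarrow> A \<subseteq> B \<Longrightarrow> finite B \<Longrightarrow> prod_meas P A \<le> prod_meas P B"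
  unfolding prod_meas_def by (intro sum_mono2 prod_list_nonneg) auto

lemma pm_union: "(\<And>a. P a \<ge> 0) \<Longrightarrow> finite A \<Longrightarrow> finite B \<Longrightarrow> prod_meas P (A \<union> B) \<le> prod_meas P A + prod_meas P B"
  unfolding prod_meas_def using sum.union_inter[of A B "\<lambda>xs. prod_list (map P xs)"]
    sum_nonneg[of "A \<inter> B" "\<lambda>xs. prod_list (map P xs)"] prod_list_nonneg
  by (metis (no_types, lifting) ex_map_conv le_add_same_cancel1 add.commute)

lemma pm_diff: "finite B \<Longrightarrow> A \<subseteq> B \<Longrightarrow> prod_meas P (B - A) = prod_meas P B - prod_meas P A"
  unfolding prod_meas_def by (simp add: sum_diff)

lemma relent_DD:
  fixes P1 P2 :: "'a::finite \<Rightarrow> real"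
  assumes pos1: "\<And>a. P1 a > 0" and pos2: "\<And>a. P2 a > 0"
  shows "relent P1 P2 = ereal (DD P1 P2)"
proof -
  have "\<not> (\<exists>s. P1 s > 0 \<and> P2 s = 0)" using pos2 by (metis less_irrefl)
  moreover have "(if P1 s = 0 then 0 else P1 s * ln (P1 s / P2 s)) = P1 s * llr P1 P2 s" for s
    using pos1[of s] pos2[of s] by (simp add: llr_def ln_div)
  ultimately show ?thesis unfolding relent_def DD_def by simp
qed

definition eps :: "nat \<Rightarrow> real" where "eps n = real n powr (-1/4)"

lemma eps_pos: "n > 0 \<Longrightarrow> eps n > 0" by (simp add: eps_def)
lemma eps_lim: "eps \<longlonglongrightarrow> 0" unfolding eps_def by real_asymp
lemma u_lim: "(\<lambda>n. c / (real n * (eps n)^2)) \<longlonglongrightarrow> 0"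
proof -
  have "(\<lambda>n. 1 / (real n * (eps n)^2)) \<longlonglongrightarrow> 0" unfolding eps_def by real_asymp
  from tendsto_mult_right_zero[OF this, of c] show ?thesis by simp
qed
lemma inv_lim: "(\<lambda>n. c / real n) \<longlonglongrightarrow> 0" by real_asymp



lemma part3:
  fixes P1 P2 :: "'a::finite \<Rightarrow> real"
  assumes d1: "is_distr P1" and d2: "is_distr P2"
    and pos1: "\<And>a. P1 a > 0" and pos2: "\<And>a. P2 a > 0"
  shows "\<exists>C::nat \<Rightarrow> 'a list set. (\<forall>n. C n \<subseteq> words n) \<and>
           (\<lambda>n. prod_meas P1 (words n - C n)) \<longlonglongrightarrow> 0 \<and>
           (\<lambda>n. ereal (ln (prod_meas P2 (C n)) / real n)) \<longlonglongrightarrow> - relent P1 P2"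
proof -
  define C where "C n = typset P1 P2 (eps n) n" for n
  define \<alpha> where "\<alpha> n = prod_meas P1 (words n - C n)" for n
  define D where "D = DD P1 P2"
  have nn1: "\<And>a. P1 a \<ge> 0" using pos1 less_imp_le by blast
  have nn2: "\<And>a. P2 a \<ge> 0" using pos2 less_imp_le by blast
  have Csub: "C n \<subseteq> words n" for n by (auto simp: C_def typset_def)
  have \<alpha>lim: "\<alpha> \<longlonglongrightarrow> 0"
  proof (rule tendsto_sandwich[OF _ _ tendsto_const u_lim[of "VV P1 P2"]])
    show "\<forall>\<^sub>F n in sequentially. 0 \<le> \<alpha> n" unfolding \<alpha>_def by (intro always_eventually allI pm_nonneg) (rule nn1)
    show "\<forall>\<^sub>F n in sequentially. \<alpha> n \<le> VV P1 P2 / (real n * (eps n)\<^sup>2)"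
      using eventually_gt_at_top[of 0]
      by eventually_elim (auto simp: \<alpha>_def C_def intro!: cheb d1 eps_pos)
  qed
  have ev: "\<forall>\<^sub>F n in sequentially. \<alpha> n < 1/2 \<and> n > 0"
    using eventually_conj[OF order_tendstoD(2)[OF \<alpha>lim, of "1/2"] eventually_gt_at_top[of 0]] by simp
  define lo where "lo n = - (D + eps n) + ln (1/2) / real n" for n
  define hi where "hi n = - (D - eps n)" for n
  have "(\<lambda>n. ln (prod_meas P2 (C n)) / real n) \<longlonglongrightarrow> - D"
  proof (rule tendsto_sandwich[of lo _ _ hi])
    show "lo \<longlonglongrightarrow> - D" unfolding lo_def
      using tendsto_add[OF tendsto_minus[OF tendsto_add[OF tendsto_const[of D] eps_lim]] inv_lim[of "ln (1/2)"]] by simp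
    show "hi \<longlonglongrightarrow> - D" unfolding hi_def
      using tendsto_minus[OF tendsto_diff[OF tendsto_const[of D] eps_lim]] by simp
    have EV: "\<forall>\<^sub>F n in sequentially. lo n \<le> ln (prod_meas P2 (C n)) / real n \<and> ln (prod_meas P2 (C n)) / real n \<le> hi n"
      using ev
    proof eventually_elim
      case (elim n)
      hence n: "real n > 0" and a: "\<alpha> n < 1/2" by auto
      have m: "prod_meas P1 (C n) = 1 - \<alpha> n"
        unfolding \<alpha>_def using pm_diff[OF finite_words Csub, of P1] prod_meas_words[OF d1] by simp
      have a0: "\<alpha> n \<ge> 0" unfolding \<alpha>_def by (rule pm_nonneg[of P1, OF nn1])
      have b1: "exp (- (real n * (D + eps n))) * (1 - \<alpha> n) \<le> prod_meas P2 (C n)"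
        using set_bounds(1)[of P1 P2 "C n" "eps n" n, OF pos1 pos2] m by (simp add: C_def D_def)
      have b2: "prod_meas P2 (C n) \<le> exp (- (real n * (D - eps n))) * (1 - \<alpha> n)"
        using set_bounds(2)[of P1 P2 "C n" "eps n" n, OF pos1 pos2] m by (simp add: C_def D_def)
      have pos: "exp (- (real n * (D + eps n))) * (1 - \<alpha> n) > 0" using a by simp
      have l1: "ln (exp (- (real n * (D + eps n))) * (1 - \<alpha> n)) \<le> ln (prod_meas P2 (C n))"
        using b1 pos by simp
      have l2: "ln (prod_meas P2 (C n)) \<le> ln (exp (- (real n * (D - eps n))) * (1 - \<alpha> n))"
        using b2 pos b1 by (subst ln_le_cancel_iff) auto
      have e1: "ln (exp (- (real n * (D + eps n))) * (1 - \<alpha> n)) = - (real n * (D + eps n)) + ln (1 - \<alpha> n)"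
        using a by (simp add: ln_mult_pos)
      have e2: "ln (exp (- (real n * (D - eps n))) * (1 - \<alpha> n)) = - (real n * (D - eps n)) + ln (1 - \<alpha> n)"
        using a by (simp add: ln_mult_pos)
      have la1: "ln (1/2) \<le> ln (1 - \<alpha> n)" using a by (subst ln_le_cancel_iff) auto
      have la2: "ln (1 - \<alpha> n) \<le> 0" using a a0 by simp
      have "- (real n * (D + eps n)) + ln (1/2) \<le> ln (prod_meas P2 (C n))" using l1 e1 la1 by linarith
      moreover have "lo n * real n = - (real n * (D + eps n)) + ln (1/2)"
        unfolding lo_def using n by (simp add: algebra_simps)
      ultimately have 1: "lo n \<le> ln (prod_meas P2 (C n)) / real n"
        by (simp add: pos_le_divide_eq[OF n])
      have "ln (prod_meas P2 (C n)) \<le> - (real n * (D - eps n))" using l2 e2 la2 by linarith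
      moreover have "hi n * real n = - (real n * (D - eps n))"
        unfolding hi_def using n by (simp add: algebra_simps)
      ultimately have 2: "ln (prod_meas P2 (C n)) / real n \<le> hi n"
        by (simp add: pos_divide_le_eq[OF n])
      show ?case using 1 2 by simp
    qed
    from EV show "\<forall>\<^sub>F n in sequentially. lo n \<le> ln (prod_meas P2 (C n)) / real n"
      by (rule eventually_mono) simp
    from EV show "\<forall>\<^sub>F n in sequentially. ln (prod_meas P2 (C n)) / real n \<le> hi n"
      by (rule eventually_mono) simp
  qed
  hence "(\<lambda>n. ereal (ln (prod_meas P2 (C n)) / real n)) \<longlonglongrightarrow> - relent P1 P2"
    using relent_DD[of P1 P2, OF pos1 pos2] by (simp add: D_def)
  thus ?thesis using Csub \<alpha>lim unfolding \<alpha>_def by blast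
qed



lemma part2:
  fixes P1 P2 :: "'a::finite \<Rightarrow> real" and C :: "nat \<Rightarrow> 'a list set"
  assumes d1: "is_distr P1" and d2: "is_distr P2"
    and pos1: "\<And>a. P1 a > 0" and pos2: "\<And>a. P2 a > 0"
    and Csub: "\<forall>n. C n \<subseteq> words n"
    and \<alpha>lim: "(\<lambda>n. prod_meas P1 (words n - C n)) \<longlonglongrightarrow> 0"
  shows "liminf (\<lambda>n. ereal (ln (prod_meas P2 (C n)) / real n)) \<ge> - relent P1 P2"
proof -
  define T where "T n = typset P1 P2 (eps n) n" for n
  define \<alpha> where "\<alpha> n = prod_meas P1 (words n - C n)" for n
  define u where "u n = VV P1 P2 / (real n * (eps n)^2)" for n
  define D where "D = DD P1 P2"
  have nn1: "\<And>a. P1 a \<ge> 0" using pos1 less_imp_le by blast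
  have nn2: "\<And>a. P2 a \<ge> 0" using pos2 less_imp_le by blast
  have Tsub: "T n \<subseteq> words n" for n by (auto simp: T_def typset_def)
  have lim2: "(\<lambda>n. \<alpha> n + u n) \<longlonglongrightarrow> 0"
    using tendsto_add[OF \<alpha>lim u_lim[of "VV P1 P2"]] by (simp add: \<alpha>_def u_def)
  have ev: "\<forall>\<^sub>F n in sequentially. \<alpha> n + u n < 1/2 \<and> n > 0"
    using eventually_conj[OF order_tendstoD(2)[OF lim2, of "1/2"] eventually_gt_at_top[of 0]] by simp
  define lo where "lo n = - (D + eps n) + ln (1/2) / real n" for n
  have lolim: "lo \<longlonglongrightarrow> - D" unfolding lo_def
    using tendsto_add[OF tendsto_minus[OF tendsto_add[OF tendsto_const[of D] eps_lim]] inv_lim[of "ln (1/2)"]] by simp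
  have EV: "\<forall>\<^sub>F n in sequentially. ereal (lo n) \<le> ereal (ln (prod_meas P2 (C n)) / real n)"
    using ev
  proof eventually_elim
    case (elim n)
    hence n: "real n > 0" and n0: "n > 0" and a: "\<alpha> n + u n < 1/2" by auto
    have fw: "finite (words n :: 'a list set)" by simp
    have f1: "finite (C n \<inter> T n)" by (rule finite_subset[OF _ fw]) (use Tsub in auto)
    have "1 = prod_meas P1 (words n)" using prod_meas_words[OF d1] by simp
    also have "\<dots> \<le> prod_meas P1 ((C n \<inter> T n) \<union> (words n - C n) \<union> (words n - T n))"
      by (rule pm_mono[OF nn1]) (use Csub f1 in auto)
    also have "\<dots> \<le> prod_meas P1 (C n \<inter> T n) + prod_meas P1 (words n - C n) + prod_meas P1 (words n - T n)"
    proof -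
      have f2: "finite (words n - C n)" "finite (words n - T n)" by simp_all
      show ?thesis using pm_union[of P1, OF nn1 f1 f2(1)] pm_union[of P1, OF nn1 _ f2(2), of "C n \<inter> T n \<union> (words n - C n)"] f1 f2
        by simp
    qed
    also have "prod_meas P1 (words n - T n) \<le> u n"
      unfolding T_def u_def by (rule cheb[OF d1 eps_pos[OF n0] n0])
    finally have m: "prod_meas P1 (C n \<inter> T n) \<ge> 1/2" using a by (simp add: \<alpha>_def)
    have "exp (- (real n * (D + eps n))) * prod_meas P1 (C n \<inter> T n) \<le> prod_meas P2 (C n \<inter> T n)"
      using set_bounds(1)[of P1 P2 "C n \<inter> T n" "eps n" n, OF pos1 pos2] by (auto simp: T_def D_def)
    also have "\<dots> \<le> prod_meas P2 (C n)"
      by (rule pm_mono[OF nn2]) (use Csub finite_subset[OF _ fw] in auto)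
    finally have b: "exp (- (real n * (D + eps n))) * (1/2) \<le> prod_meas P2 (C n)"
      using m by (smt (verit) exp_gt_zero mult_left_mono)
    have pos: "exp (- (real n * (D + eps n))) * (1/2) > 0" by simp
    have "ln (exp (- (real n * (D + eps n))) * (1/2)) \<le> ln (prod_meas P2 (C n))"
    proof (subst ln_le_cancel_iff)
      show "0 < prod_meas P2 (C n)" using b pos by linarith
    qed (use b pos in auto)
    moreover have "ln (exp (- (real n * (D + eps n))) * (1/2)) = - (real n * (D + eps n)) + ln (1/2)"
      by (rule trans[OF ln_mult_pos]) simp_all
    moreover have "lo n * real n = - (real n * (D + eps n)) + ln (1/2)"
      unfolding lo_def using n by (simp add: algebra_simps)
    ultimately have "lo n \<le> ln (prod_meas P2 (C n)) / real n"
      by (simp add: pos_le_divide_eq[OF n])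
    thus ?case by simp
  qed
  have "liminf (\<lambda>n. ereal (lo n)) = ereal (- D)"
    by (rule lim_imp_Liminf) (simp_all add: lolim)
  moreover have "liminf (\<lambda>n. ereal (lo n)) \<le> liminf (\<lambda>n. ereal (ln (prod_meas P2 (C n)) / real n))"
    by (rule Liminf_mono[OF EV])
  ultimately show ?thesis using relent_DD[of P1 P2, OF pos1 pos2] by (simp add: D_def)
qed


theorem corollary1:
  fixes P1 P2 :: "'a::finite \<Rightarrow> real"
  assumes "is_distr P1" and "is_distr P2"
    and "\<And>a. P1 a > 0" and "\<And>a. P2 a > 0"
  shows "(\<forall>(n::nat) (C::'a list set). n \<ge> 1 \<longrightarrow> C \<subseteq> words n \<longrightarrow> C \<noteq> {} \<longrightarrow>
           - ereal (real n) * err_exp P1 P2 (prod_meas P1 (words n - C))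
             \<le> ereal (ln (prod_meas P2 C)))
       \<and> (\<forall>C::nat \<Rightarrow> 'a list set. (\<forall>n. C n \<subseteq> words n) \<longrightarrow>
           (\<lambda>n. prod_meas P1 (words n - C n)) \<longlonglongrightarrow> 0 \<longrightarrow>
           liminf (\<lambda>n. ereal (ln (prod_meas P2 (C n)) / real n)) \<ge> - relent P1 P2)
       \<and> (\<exists>C::nat \<Rightarrow> 'a list set. (\<forall>n. C n \<subseteq> words n) \<and>
           (\<lambda>n. prod_meas P1 (words n - C n)) \<longlonglongrightarrow> 0 \<and>
           (\<lambda>n. ereal (ln (prod_meas P2 (C n)) / real n)) \<longlonglongrightarrow> - relent P1 P2)"
  using part1[of P1 P2, OF assms] part2[of P1 P2, OF assms] part3[of P1 P2, OF assms]
  by blast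

end
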